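(* Let $G=\mathbb Z\ast\mathbb Z^2=\langle t\rangle\ast\langle a,b\mid [a,b]\rangle$ and let $\varphi$ be the automorphism of $G$ with $\varphi(t)=ta$, $\varphi(a)=a$, $\varphi(b)=b$. Then $\operatorname{Fix}(\varphi)=\langle a,b\rangle\ast t\langle a,b\rangle t^{-1}\cong\mathbb Z^2\ast\mathbb Z^2$, so $\operatorname{rk}(\operatorname{Fix}(\varphi))=4=2(\operatorname{rk}(G)-1)$; thus the bound $n(\operatorname{rk}(G)-n+1)$ for endomorphisms of a free product of $n$ free abelian groups is attained.
   Context: $\operatorname{rk}$ is the minimal number of generators; $\operatorname{Fix}(\varphi)=\{g\mid\varphi(g)=g\}$. *)

theory Defs
  imports "HOL-Algebra.Algebra"
begin

fun fp_reduced :: "('a, 'c) monoid_scheme \<Rightarrow> ('b, 'd) monoid_scheme \<Rightarrow> ('a + 'b) list \<Rightarrow> bool" where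
  "fp_reduced G H [] = True"
| "fp_reduced G H [Inl x] = (x \<in> carrier G \<and> x \<noteq> \<one>\<^bsub>G\<^esub>)"
| "fp_reduced G H [Inr y] = (y \<in> carrier H \<and> y \<noteq> \<one>\<^bsub>H\<^esub>)"
| "fp_reduced G H (Inl x # Inl x' # w) = False"
| "fp_reduced G H (Inr y # Inr y' # w) = False"
| "fp_reduced G H (Inl x # Inr y # w) =
     (x \<in> carrier G \<and> x \<noteq> \<one>\<^bsub>G\<^esub> \<and> fp_reduced G H (Inr y # w))"
| "fp_reduced G H (Inr y # Inl x # w) =
     (y \<in> carrier H \<and> y \<noteq> \<one>\<^bsub>H\<^esub> \<and> fp_reduced G H (Inl x # w))"

fun fp_cons :: "('a, 'c) monoid_scheme \<Rightarrow> ('b, 'd) monoid_scheme \<Rightarrow> ('a + 'b) \<Rightarrow> ('a + 'b) list \<Rightarrow> ('a + 'b) list" where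
  "fp_cons G H (Inl x) [] = (if x = \<one>\<^bsub>G\<^esub> then [] else [Inl x])"
| "fp_cons G H (Inr y) [] = (if y = \<one>\<^bsub>H\<^esub> then [] else [Inr y])"
| "fp_cons G H (Inl x) (Inl x' # w) =
     (if x \<otimes>\<^bsub>G\<^esub> x' = \<one>\<^bsub>G\<^esub> then w else Inl (x \<otimes>\<^bsub>G\<^esub> x') # w)"
| "fp_cons G H (Inr y) (Inr y' # w) =
     (if y \<otimes>\<^bsub>H\<^esub> y' = \<one>\<^bsub>H\<^esub> then w else Inr (y \<otimes>\<^bsub>H\<^esub> y') # w)"
| "fp_cons G H (Inl x) (Inr y # w) =
     (if x = \<one>\<^bsub>G\<^esub> then Inr y # w else Inl x # Inr y # w)"
| "fp_cons G H (Inr y) (Inl x # w) =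
     (if y = \<one>\<^bsub>H\<^esub> then Inl x # w else Inr y # Inl x # w)"

definition fp_normalize :: "('a, 'c) monoid_scheme \<Rightarrow> ('b, 'd) monoid_scheme \<Rightarrow> ('a + 'b) list \<Rightarrow> ('a + 'b) list" where
  "fp_normalize G H w = foldr (fp_cons G H) w []"

definition free_prod :: "('a, 'c) monoid_scheme \<Rightarrow> ('b, 'd) monoid_scheme \<Rightarrow> ('a + 'b) list monoid" where
  "free_prod G H = \<lparr> carrier = {w. fp_reduced G H w},
                     monoid.mult = (\<lambda>u v. fp_normalize G H (u @ v)),
                     one = [] \<rparr>"

definition group_rank :: "('a, 'c) monoid_scheme \<Rightarrow> nat" where
  "group_rank G = (LEAST n. \<exists>S. S \<subseteq> carrier G \<and> finite S \<and> card S = n \<and> generate G S = carrier G)"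

definition Fix :: "('a, 'c) monoid_scheme \<Rightarrow> ('a \<Rightarrow> 'a) \<Rightarrow> 'a set" where
  "Fix G \<phi> = {g \<in> carrier G. \<phi> g = g}"

abbreviation Z2 :: "(int \<times> int) monoid" where
  "Z2 \<equiv> integer_group \<times>\<times> integer_group"

definition GZ :: "(int + int \<times> int) list monoid" where
  "GZ = free_prod integer_group Z2"

definition gen_t :: "(int + int \<times> int) list" where "gen_t = [Inl 1]"
definition gen_a :: "(int + int \<times> int) list" where "gen_a = [Inr (1, 0)]"
definition gen_b :: "(int + int \<times> int) list" where "gen_b = [Inr (0, 1)]"

text \<open>The endomorphism determined by \<open>t \<mapsto> ta, a \<mapsto> a, b \<mapsto> b\<close>:
  a letter \<open>t^n\<close> is sent to \<open>(ta)^n\<close>, a letter \<open>a^i b^j\<close> is fixed, and the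
  images of the letters are multiplied in \<open>GZ\<close>.\<close>
definition phi_letter :: "int + int \<times> int \<Rightarrow> (int + int \<times> int) list" where
  "phi_letter l = (case l of
       Inl n \<Rightarrow> (gen_t \<otimes>\<^bsub>GZ\<^esub> gen_a) [^]\<^bsub>GZ\<^esub> n
     | Inr p \<Rightarrow> [Inr p])"

definition phi :: "(int + int \<times> int) list \<Rightarrow> (int + int \<times> int) list" where
  "phi w = foldr (\<lambda>l acc. phi_letter l \<otimes>\<^bsub>GZ\<^esub> acc) w \<one>\<^bsub>GZ\<^esub>"

end

theory Submission
  imports Defs
begin


definition fpext :: "('k,'e) monoid_scheme \<Rightarrow> ('a \<Rightarrow> 'k) \<Rightarrow> ('b \<Rightarrow> 'k) \<Rightarrow> ('a + 'b) list \<Rightarrow> 'k" where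
  "fpext K f g w = foldr (\<lambda>l acc. case_sum f g l \<otimes>\<^bsub>K\<^esub> acc) w \<one>\<^bsub>K\<^esub>"

lemma fpext_Nil[simp]: "fpext K f g [] = \<one>\<^bsub>K\<^esub>"
  and fpext_Cons[simp]: "fpext K f g (l # w) = case_sum f g l \<otimes>\<^bsub>K\<^esub> fpext K f g w"
  by (auto simp: fpext_def)

lemma fpext_append: "monoid K \<Longrightarrow> (\<forall>l\<in>set u. case_sum f g l \<in> carrier K) \<Longrightarrow> (\<forall>l\<in>set v. case_sum f g l \<in> carrier K) \<Longrightarrow>
   fpext K f g (u @ v) = fpext K f g u \<otimes>\<^bsub>K\<^esub> fpext K f g v"
proof (induction u)
  case Nil
  have "fpext K f g v \<in> carrier K" using Nil(3)
    by (induction v) (auto intro: monoid.m_closed[OF Nil(1)] monoid.one_closed[OF Nil(1)])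
  then show ?case using Nil by (simp add: monoid.l_one)
next
  case (Cons a u)
  have c: "fpext K f g w \<in> carrier K" if "\<forall>l\<in>set w. case_sum f g l \<in> carrier K" for w
    using that by (induction w) (auto intro: monoid.m_closed[OF Cons(2)] monoid.one_closed[OF Cons(2)])
  show ?case using Cons c[of u] c[of v] by (simp add: monoid.m_assoc)
qed

definition fpi1 :: "('a,'c) monoid_scheme \<Rightarrow> 'a \<Rightarrow> ('a + 'b) list" where
  "fpi1 G x = (if x = \<one>\<^bsub>G\<^esub> then [] else [Inl x])"
definition fpi2 :: "('b,'d) monoid_scheme \<Rightarrow> 'b \<Rightarrow> ('a + 'b) list" where
  "fpi2 H y = (if y = \<one>\<^bsub>H\<^esub> then [] else [Inr y])"

locale fp2 = G: group G + H: group H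
  for G :: "('a,'c) monoid_scheme" and H :: "('b,'d) monoid_scheme"
begin

definition lcar :: "('a + 'b) \<Rightarrow> bool" where
  "lcar l = (case l of Inl x \<Rightarrow> x \<in> carrier G | Inr y \<Rightarrow> y \<in> carrier H)"

definition nid :: "('a + 'b) \<Rightarrow> bool" where
  "nid l = (case l of Inl x \<Rightarrow> x \<noteq> \<one>\<^bsub>G\<^esub> | Inr y \<Rightarrow> y \<noteq> \<one>\<^bsub>H\<^esub>)"

lemma lcar_simps[simp]: "lcar (Inl x) = (x \<in> carrier G)" "lcar (Inr y) = (y \<in> carrier H)"
  by (auto simp: lcar_def)
lemma nid_simps[simp]: "nid (Inl x) = (x \<noteq> \<one>\<^bsub>G\<^esub>)" "nid (Inr y) = (y \<noteq> \<one>\<^bsub>H\<^esub>)"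
  by (auto simp: nid_def)

lemma red_Cons: "fp_reduced G H (l # w) \<longleftrightarrow>
   lcar l \<and> nid l \<and> fp_reduced G H w \<and> (w = [] \<or> isl (hd w) \<noteq> isl l)"
proof (induction w arbitrary: l)
  case Nil then show ?case by (cases l) auto
next
  case (Cons a w)
  then show ?case by (cases l; cases a) auto
qed

lemma red_Nil[simp]: "fp_reduced G H []" by simp

declare fp_reduced.simps(2-)[simp del]

lemma red_tl: "fp_reduced G H (l # w) \<Longrightarrow> fp_reduced G H w"
  by (simp add: red_Cons)

lemma red_letters: "fp_reduced G H w \<Longrightarrow> l \<in> set w \<Longrightarrow> lcar l"
  by (induction w) (auto simp: red_Cons)

lemma cons_red: "lcar l \<Longrightarrow> fp_reduced G H w \<Longrightarrow> fp_reduced G H (fp_cons G H l w)"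
proof (cases l)
  case (Inl x)
  assume "lcar l" "fp_reduced G H w"
  then show ?thesis using Inl
    by (cases w; simp add: red_Cons; rename_tac a w'; case_tac a; auto simp: red_Cons)
next
  case (Inr y)
  assume "lcar l" "fp_reduced G H w"
  then show ?thesis using Inr
    by (cases w; simp add: red_Cons; rename_tac a w'; case_tac a; auto simp: red_Cons)
qed

lemma cons_one_l: "fp_reduced G H w \<Longrightarrow> fp_cons G H (Inl \<one>\<^bsub>G\<^esub>) w = w"
  by (cases w; simp; rename_tac a w'; case_tac a; auto simp: red_Cons)
lemma cons_one_r: "fp_reduced G H w \<Longrightarrow> fp_cons G H (Inr \<one>\<^bsub>H\<^esub>) w = w"
  by (cases w; simp; rename_tac a w'; case_tac a; auto simp: red_Cons)

lemma cons_red_eq: "fp_reduced G H (l # w) \<Longrightarrow> fp_cons G H l w = l # w"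
  by (cases l; cases w; simp add: red_Cons; rename_tac a w'; case_tac a; auto simp: red_Cons)

lemma cons_cons_l:
  assumes "x \<in> carrier G" "y \<in> carrier G" "fp_reduced G H w"
  shows "fp_cons G H (Inl x) (fp_cons G H (Inl y) w) = fp_cons G H (Inl (x \<otimes>\<^bsub>G\<^esub> y)) w"
proof (cases w)
  case Nil then show ?thesis using assms by auto
next
  case (Cons a w')
  show ?thesis
  proof (cases a)
    case (Inl z)
    have z: "z \<in> carrier G" using assms Cons Inl by (simp add: red_Cons)
    show ?thesis
    proof (cases "y \<otimes>\<^bsub>G\<^esub> z = \<one>\<^bsub>G\<^esub>")
      case True
      then have "x \<otimes>\<^bsub>G\<^esub> y \<otimes>\<^bsub>G\<^esub> z = x" using assms z by (simp add: G.m_assoc)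
      then show ?thesis using True Cons Inl assms
        by (cases w'; simp add: red_Cons; rename_tac b w''; case_tac b; auto simp: red_Cons)
    next
      case False
      then show ?thesis using Cons Inl assms z by (auto simp: G.m_assoc)
    qed
  next
    case (Inr z)
    then show ?thesis using Cons assms by auto
  qed
qed

lemma cons_cons_r:
  assumes "x \<in> carrier H" "y \<in> carrier H" "fp_reduced G H w"
  shows "fp_cons G H (Inr x) (fp_cons G H (Inr y) w) = fp_cons G H (Inr (x \<otimes>\<^bsub>H\<^esub> y)) w"
proof (cases w)
  case Nil then show ?thesis using assms by auto
next
  case (Cons a w')
  show ?thesis
  proof (cases a)
    case (Inr z)
    have z: "z \<in> carrier H" using assms Cons Inr by (simp add: red_Cons)
    show ?thesis
    proof (cases "y \<otimes>\<^bsub>H\<^esub> z = \<one>\<^bsub>H\<^esub>")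
      case True
      then have "x \<otimes>\<^bsub>H\<^esub> y \<otimes>\<^bsub>H\<^esub> z = x" using assms z by (simp add: H.m_assoc)
      then show ?thesis using True Cons Inr assms
        by (cases w'; simp add: red_Cons; rename_tac b w''; case_tac b; auto simp: red_Cons)
    next
      case False
      then show ?thesis using Cons Inr assms z by (auto simp: H.m_assoc)
    qed
  next
    case (Inl z)
    then show ?thesis using Cons assms by auto
  qed
qed


abbreviation "FC \<equiv> fp_cons G H"
abbreviation "FP \<equiv> free_prod G H"

lemma foldr_red: "\<forall>l\<in>set x. lcar l \<Longrightarrow> fp_reduced G H w \<Longrightarrow> fp_reduced G H (foldr FC x w)"
  by (induction x) (auto intro: cons_red)

lemma norm_red: "\<forall>l\<in>set x. lcar l \<Longrightarrow> fp_reduced G H (fp_normalize G H x)"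
  unfolding fp_normalize_def by (rule foldr_red) auto

lemma norm_id: "fp_reduced G H w \<Longrightarrow> fp_normalize G H w = w"
  unfolding fp_normalize_def
proof (induction w)
  case (Cons a w)
  then show ?case using red_tl[OF Cons.prems] cons_red_eq by auto
qed simp

lemma norm_append: "fp_normalize G H (u @ v) = foldr FC u (fp_normalize G H v)"
  unfolding fp_normalize_def by simp

lemma action:
  assumes "lcar l" "fp_reduced G H r" "fp_reduced G H w"
  shows "foldr FC (FC l r) w = FC l (foldr FC r w)"
proof -
  have rw: "fp_reduced G H (foldr FC r' w)" if "fp_reduced G H r'" for r'
    using foldr_red red_letters that assms(3) by blast
  show ?thesis
  proof (cases r)
    case Nil
    then show ?thesis using assms by (cases l) (auto simp: cons_one_l cons_one_r)
  next
    case (Cons a r')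
    have r': "fp_reduced G H r'" "lcar a" using assms Cons by (auto simp: red_Cons)
    show ?thesis
    proof (cases l; cases a)
      fix x x' assume l: "l = Inl x" and a: "a = Inl x'"
      then show ?thesis using Cons assms r' rw[OF r'(1)]
        by (auto simp: cons_cons_l cons_one_l)
    next
      fix x x' assume l: "l = Inr x" and a: "a = Inr x'"
      then show ?thesis using Cons assms r' rw[OF r'(1)]
        by (auto simp: cons_cons_r cons_one_r)
    next
      fix x x' assume l: "l = Inl x" and a: "a = Inr x'"
      then show ?thesis using Cons assms r' rw[OF assms(2)]
        by (auto simp: cons_one_l)
    next
      fix x x' assume l: "l = Inr x" and a: "a = Inl x'"
      then show ?thesis using Cons assms r' rw[OF assms(2)]
        by (auto simp: cons_one_r)
    qed
  qed
qed

lemma foldr_norm: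
  assumes "\<forall>l\<in>set x. lcar l" "fp_reduced G H w"
  shows "foldr FC (fp_normalize G H x) w = foldr FC x w"
  using assms(1)
proof (induction x)
  case Nil then show ?case by (simp add: fp_normalize_def)
next
  case (Cons a x)
  have "fp_normalize G H (a # x) = FC a (fp_normalize G H x)"
    by (simp add: fp_normalize_def)
  then show ?case using Cons action[OF _ norm_red assms(2)] by simp
qed

lemma FP_simps[simp]: "carrier FP = {w. fp_reduced G H w}" "\<one>\<^bsub>FP\<^esub> = []"
  by (auto simp: free_prod_def)
lemma FP_mult: "u \<otimes>\<^bsub>FP\<^esub> v = fp_normalize G H (u @ v)"
  by (auto simp: free_prod_def)

lemma FP_monoid: "monoid FP"
proof (rule monoidI)
  fix x y z assume xyz: "x \<in> carrier FP" "y \<in> carrier FP" "z \<in> carrier FP"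
  have "\<forall>l\<in>set (x@y). lcar l" using xyz red_letters by fastforce
  then show "x \<otimes>\<^bsub>FP\<^esub> y \<in> carrier FP"
    using norm_red by (simp add: FP_mult)
  have "\<forall>l\<in>set (y@z). lcar l" using xyz red_letters by fastforce
  then have yz: "fp_reduced G H (fp_normalize G H (y @ z))"
    using norm_red by blast
  have xy: "\<forall>l\<in>set (x@y). lcar l" using xyz red_letters by fastforce
  show "x \<otimes>\<^bsub>FP\<^esub> y \<otimes>\<^bsub>FP\<^esub> z = x \<otimes>\<^bsub>FP\<^esub> (y \<otimes>\<^bsub>FP\<^esub> z)"
  proof -
    have z: "fp_reduced G H z" using xyz by simp
    have "x \<otimes>\<^bsub>FP\<^esub> y \<otimes>\<^bsub>FP\<^esub> z = foldr FC (fp_normalize G H (x @ y)) z"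
      using z by (simp only: FP_mult norm_append norm_id)
    also have "\<dots> = foldr FC (x @ y) z" by (rule foldr_norm[OF xy z])
    also have "\<dots> = x \<otimes>\<^bsub>FP\<^esub> (y \<otimes>\<^bsub>FP\<^esub> z)"
      using z yz by (simp add: FP_mult norm_append norm_id)
    finally show ?thesis .
  qed
next
  fix x assume "x \<in> carrier FP"
  then show "\<one>\<^bsub>FP\<^esub> \<otimes>\<^bsub>FP\<^esub> x = x" "x \<otimes>\<^bsub>FP\<^esub> \<one>\<^bsub>FP\<^esub> = x" by (auto simp: FP_mult norm_id)
qed auto

interpretation FPm: monoid FP by (rule FP_monoid)

definition linv :: "('a + 'b) \<Rightarrow> ('a + 'b)" where
  "linv l = (case l of Inl x \<Rightarrow> Inl (inv\<^bsub>G\<^esub> x) | Inr y \<Rightarrow> Inr (inv\<^bsub>H\<^esub> y))"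

lemma mult_letter: "fp_reduced G H w \<Longrightarrow> [l] \<otimes>\<^bsub>FP\<^esub> w = FC l w"
  using norm_id[unfolded fp_normalize_def] by (simp add: FP_mult fp_normalize_def)

lemma FP_group: "group FP"
proof (rule FPm.group_l_invI)
  fix x assume "x \<in> carrier FP"
  then have "fp_reduced G H x" by simp
  then show "\<exists>y\<in>carrier FP. y \<otimes>\<^bsub>FP\<^esub> x = \<one>\<^bsub>FP\<^esub>"
  proof (induction x)
    case Nil then show ?case by (auto simp: FP_mult norm_id)
  next
    case (Cons l x)
    have x: "fp_reduced G H x" and l: "lcar l" "nid l" using Cons.prems by (auto simp: red_Cons)
    obtain y where y: "y \<in> carrier FP" "y \<otimes>\<^bsub>FP\<^esub> x = []" using Cons.IH[OF x] by auto
    have li: "[linv l] \<in> carrier FP" using l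
      by (cases l) (auto simp: linv_def red_Cons)
    have lx: "l # x = [l] \<otimes>\<^bsub>FP\<^esub> x" using mult_letter cons_red_eq Cons.prems x by simp
    have l1: "[l] \<in> carrier FP" using l by (cases l) (auto simp: red_Cons)
    have xc: "x \<in> carrier FP" using x by simp
    have ll: "[linv l] \<otimes>\<^bsub>FP\<^esub> [l] = []" using l
      by (cases l) (auto simp: FP_mult linv_def fp_normalize_def)
    have "(y \<otimes>\<^bsub>FP\<^esub> [linv l]) \<otimes>\<^bsub>FP\<^esub> (l # x) = y \<otimes>\<^bsub>FP\<^esub> (([linv l] \<otimes>\<^bsub>FP\<^esub> [l]) \<otimes>\<^bsub>FP\<^esub> x)"
      using lx y li l1 x FPm.m_assoc[of y "[linv l]" "[l] \<otimes>\<^bsub>FP\<^esub> x"] FPm.m_assoc[of "[linv l]" "[l]" x]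
         FPm.m_closed[of "[l]" x] xc
      by (simp del: FP_simps)
    also have "\<dots> = []" using ll y x by (simp add: FP_mult norm_id)
    finally show ?case using y li FPm.m_closed by (metis FP_simps(2))
  qed
qed


lemma FP_mult_red: "fp_reduced G H u \<Longrightarrow> fp_reduced G H v \<Longrightarrow> u \<otimes>\<^bsub>FP\<^esub> v = foldr FC u v"
  by (simp add: FP_mult norm_append norm_id)

lemma i1_mult: "fp_reduced G H w \<Longrightarrow> fpi1 G x \<otimes>\<^bsub>FP\<^esub> w = FC (Inl x) w"
  by (auto simp: fpi1_def FP_mult_red cons_one_l red_Cons mult_letter)
lemma i2_mult: "fp_reduced G H w \<Longrightarrow> fpi2 H x \<otimes>\<^bsub>FP\<^esub> w = FC (Inr x) w"
  by (auto simp: fpi2_def FP_mult_red cons_one_r red_Cons mult_letter)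

lemma i1_carrier: "x \<in> carrier G \<Longrightarrow> fpi1 G x \<in> carrier FP"
  by (auto simp: fpi1_def red_Cons)
lemma i2_carrier: "x \<in> carrier H \<Longrightarrow> fpi2 H x \<in> carrier FP"
  by (auto simp: fpi2_def red_Cons)

lemma i1_hom: "fpi1 G \<in> hom G FP"
proof (rule homI)
  fix x y assume xy: "x \<in> carrier G" "y \<in> carrier G"
  have "fpi1 G x \<otimes>\<^bsub>FP\<^esub> fpi1 G y = FC (Inl x) (FC (Inl y) [])"
    using xy i1_mult[OF i1_carrier[of y, simplified]] by (simp add: fpi1_def[of _ y])
  also have "\<dots> = FC (Inl (x \<otimes>\<^bsub>G\<^esub> y)) []" using xy cons_cons_l by simp
  also have "\<dots> = fpi1 G (x \<otimes>\<^bsub>G\<^esub> y)" by (simp add: fpi1_def)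
  finally show "fpi1 G (x \<otimes>\<^bsub>G\<^esub> y) = fpi1 G x \<otimes>\<^bsub>FP\<^esub> fpi1 G y" by simp
qed (rule i1_carrier)

lemma i2_hom: "fpi2 H \<in> hom H FP"
proof (rule homI)
  fix x y assume xy: "x \<in> carrier H" "y \<in> carrier H"
  have "fpi2 H x \<otimes>\<^bsub>FP\<^esub> fpi2 H y = FC (Inr x) (FC (Inr y) [])"
    using xy i2_mult[OF i2_carrier[of y, simplified]] by (simp add: fpi2_def[of _ y])
  also have "\<dots> = FC (Inr (x \<otimes>\<^bsub>H\<^esub> y)) []" using xy cons_cons_r by simp
  also have "\<dots> = fpi2 H (x \<otimes>\<^bsub>H\<^esub> y)" by (simp add: fpi2_def)
  finally show "fpi2 H (x \<otimes>\<^bsub>H\<^esub> y) = fpi2 H x \<otimes>\<^bsub>FP\<^esub> fpi2 H y" by simp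
qed (rule i2_carrier)

interpretation FPg: group FP by (rule FP_group)

lemma red_eq_prod: "fp_reduced G H w \<Longrightarrow> fpext FP (fpi1 G) (fpi2 H) w = w"
proof (induction w)
  case (Cons l w)
  have w: "fp_reduced G H w" using Cons.prems red_tl by blast
  show ?case using Cons.IH[OF w] w cons_red_eq[OF Cons.prems]
    by (cases l) (auto simp: i1_mult i2_mult)
qed simp

end

locale fp2hom = fp2 + K: group K for K :: "('k,'e) monoid_scheme" +
  fixes f g assumes f: "f \<in> hom G K" and g: "g \<in> hom H K"
begin

abbreviation "E \<equiv> fpext K f g"

lemma limg_carrier: "lcar l \<Longrightarrow> case_sum f g l \<in> carrier K"
  using f g by (cases l) (auto simp: hom_def)

lemma E_carrier: "\<forall>l\<in>set w. lcar l \<Longrightarrow> E w \<in> carrier K"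
  by (induction w) (auto intro: limg_carrier)

lemma E_cons: "lcar l \<Longrightarrow> fp_reduced G H w \<Longrightarrow> E (FC l w) = case_sum f g l \<otimes>\<^bsub>K\<^esub> E w"
proof -
  assume l: "lcar l" and w: "fp_reduced G H w"
  have Ew: "E w \<in> carrier K" using E_carrier red_letters w by blast
  have Ew': "E w' \<in> carrier K" if "w = a # w'" for a w' using E_carrier red_letters w that by force
  have fa: "case_sum f g a \<in> carrier K" if "w = a # w'" for a w' using limg_carrier red_letters w that by force
  show ?thesis
  proof (cases l)
    case (Inl x)
    show ?thesis
    proof (cases w)
      case Nil then show ?thesis using Inl l f by (auto simp: hom_one[OF f G.is_group K.is_group] group.is_monoid)
    next
      case (Cons a w')
      show ?thesis
      proof (cases a)
        case (Inl z)
        have z: "z \<in> carrier G" using w Cons Inl by (simp add: red_Cons)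
        have xz: "f x \<otimes>\<^bsub>K\<^esub> f z = f (x \<otimes>\<^bsub>G\<^esub> z)" using z l \<open>l = Inl x\<close> hom_mult[OF f] by simp
        then show ?thesis using \<open>l = Inl x\<close> Cons Inl l Ew'[OF Cons] f hom_one[OF f G.is_group K.is_group] z
          by (auto simp: K.m_assoc[symmetric] hom_in_carrier[OF f])
      next
        case (Inr z)
        then show ?thesis using \<open>l = Inl x\<close> Cons l Ew hom_one[OF f G.is_group K.is_group] by auto
      qed
    qed
  next
    case (Inr x)
    show ?thesis
    proof (cases w)
      case Nil then show ?thesis using Inr l g by (auto simp: hom_one[OF g H.is_group K.is_group])
    next
      case (Cons a w')
      show ?thesis
      proof (cases a)
        case (Inr z)
        have z: "z \<in> carrier H" using w Cons Inr by (simp add: red_Cons)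
        have xz: "g x \<otimes>\<^bsub>K\<^esub> g z = g (x \<otimes>\<^bsub>H\<^esub> z)" using z l \<open>l = Inr x\<close> hom_mult[OF g] by simp
        then show ?thesis using \<open>l = Inr x\<close> Cons Inr l Ew'[OF Cons] g hom_one[OF g H.is_group K.is_group] z
          by (auto simp: K.m_assoc[symmetric] hom_in_carrier[OF g])
      next
        case (Inl z)
        then show ?thesis using \<open>l = Inr x\<close> Cons l Ew hom_one[OF g H.is_group K.is_group] by auto
      qed
    qed
  qed
qed

lemma E_norm: "\<forall>l\<in>set x. lcar l \<Longrightarrow> E (fp_normalize G H x) = E x"
proof (induction x)
  case Nil then show ?case by (simp add: fp_normalize_def)
next
  case (Cons a x)
  have "fp_normalize G H (a # x) = FC a (fp_normalize G H x)" by (simp add: fp_normalize_def)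
  then show ?case using Cons E_cons norm_red by simp
qed

lemma E_hom: "E \<in> hom FP K"
proof (rule homI)
  fix x assume "x \<in> carrier FP"
  then show "E x \<in> carrier K" using E_carrier red_letters by auto
next
  fix x y assume xy: "x \<in> carrier FP" "y \<in> carrier FP"
  have l: "\<forall>l\<in>set (x @ y). lcar l" using xy red_letters by fastforce
  have "E (x \<otimes>\<^bsub>FP\<^esub> y) = E (x @ y)" using E_norm[OF l] by (simp add: FP_mult)
  also have "\<dots> = E x \<otimes>\<^bsub>K\<^esub> E y"
    using l by (intro fpext_append K.is_monoid) (auto intro: limg_carrier)
  finally show "E (x \<otimes>\<^bsub>FP\<^esub> y) = E x \<otimes>\<^bsub>K\<^esub> E y" .
qed

lemma E_i1: "x \<in> carrier G \<Longrightarrow> E (fpi1 G x) = f x"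
  using f by (auto simp: fpi1_def hom_one[OF f G.is_group K.is_group] hom_in_carrier)
lemma E_i2: "x \<in> carrier H \<Longrightarrow> E (fpi2 H x) = g x"
  using g by (auto simp: fpi2_def hom_one[OF g H.is_group K.is_group] hom_in_carrier)

end

context fp2 begin

lemma hom_unique:
  assumes K: "group K" and h1: "h1 \<in> hom FP K" and h2: "h2 \<in> hom FP K"
    and e1: "\<And>x. x \<in> carrier G \<Longrightarrow> h1 (fpi1 G x) = h2 (fpi1 G x)"
    and e2: "\<And>x. x \<in> carrier H \<Longrightarrow> h1 (fpi2 H x) = h2 (fpi2 H x)"
    and w: "w \<in> carrier FP"
  shows "h1 w = h2 w"
proof -
  have "fp_reduced G H w" using w by simp
  then show ?thesis
  proof (induction w)
    case Nil then show ?case using hom_one[OF h1 FP_group K] hom_one[OF h2 FP_group K] by simp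
  next
    case (Cons l w)
    have w: "fp_reduced G H w" using Cons.prems red_tl by blast
    have lc: "lcar l" using Cons.prems by (simp add: red_Cons)
    show ?case
    proof (cases l)
      case (Inl x)
      have "l # w = fpi1 G x \<otimes>\<^bsub>FP\<^esub> w" using i1_mult w cons_red_eq Cons.prems Inl by simp
      moreover have "fpi1 G x \<in> carrier FP" using lc Inl i1_carrier by simp
      ultimately show ?thesis using w Cons.IH[OF w] e1 lc Inl
        by (simp add: hom_mult[OF h1] hom_mult[OF h2])
    next
      case (Inr x)
      have "l # w = fpi2 H x \<otimes>\<^bsub>FP\<^esub> w" using i2_mult w cons_red_eq Cons.prems Inr by simp
      moreover have "fpi2 H x \<in> carrier FP" using lc Inr i2_carrier by simp
      ultimately show ?thesis using w Cons.IH[OF w] e2 lc Inr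
        by (simp add: hom_mult[OF h1] hom_mult[OF h2])
    qed
  qed
qed

end


lemma Z2_group: "group Z2" by (intro DirProd_group group_integer_group)

interpretation gz: fp2 integer_group Z2
  by (intro fp2.intro group_integer_group Z2_group)

abbreviation i1 :: "int \<Rightarrow> (int + int \<times> int) list" where "i1 \<equiv> fpi1 integer_group"
abbreviation i2 :: "int \<times> int \<Rightarrow> (int + int \<times> int) list" where "i2 \<equiv> fpi2 Z2"

lemma GZ_eq: "GZ = free_prod integer_group Z2" by (simp add: GZ_def)

lemma GZ_group: "group GZ" using gz.FP_group by (simp add: GZ_def)

interpretation G: group GZ by (rule GZ_group)

lemma GZ_carrier: "carrier GZ = {w. fp_reduced integer_group Z2 w}"
  by (simp add: GZ_def)
lemma GZ_one: "\<one>\<^bsub>GZ\<^esub> = []" by (simp add: GZ_def)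

lemma i1_hom: "i1 \<in> hom integer_group GZ" using gz.i1_hom by (simp add: GZ_def)
lemma i2_hom: "i2 \<in> hom Z2 GZ" using gz.i2_hom by (simp add: GZ_def)
lemma i1_c[simp]: "i1 n \<in> carrier GZ" using hom_in_carrier[OF i1_hom] by simp
lemma i2_c[simp]: "i2 p \<in> carrier GZ" using hom_in_carrier[OF i2_hom] by simp
lemma i1_add: "i1 m \<otimes>\<^bsub>GZ\<^esub> i1 n = i1 (m + n)" using hom_mult[OF i1_hom] by simp
lemma i2_add: "i2 (a,b) \<otimes>\<^bsub>GZ\<^esub> i2 (c,d) = i2 (a + c, b + d)" using hom_mult[OF i2_hom, of "(a,b)" "(c,d)"] by simp
lemma i1_0[simp]: "i1 0 = []" by (simp add: fpi1_def)
lemma i2_0[simp]: "i2 (0,0) = []" by (simp add: fpi2_def)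
lemma i1_inv: "inv\<^bsub>GZ\<^esub> (i1 n) = i1 (- n)"
  by (rule G.inv_equality) (auto simp: i1_add GZ_one)
lemma i2_inv: "inv\<^bsub>GZ\<^esub> (i2 (a,b)) = i2 (- a, - b)"
  by (rule G.inv_equality) (auto simp: i2_add GZ_one)

lemma i1_assoc: "w \<in> carrier GZ \<Longrightarrow> i1 m \<otimes>\<^bsub>GZ\<^esub> (i1 n \<otimes>\<^bsub>GZ\<^esub> w) = i1 (m + n) \<otimes>\<^bsub>GZ\<^esub> w"
  by (simp add: G.m_assoc[symmetric] i1_add)
lemma i2_assoc: "w \<in> carrier GZ \<Longrightarrow> i2 (a,b) \<otimes>\<^bsub>GZ\<^esub> (i2 (c,d) \<otimes>\<^bsub>GZ\<^esub> w) = i2 (a + c, b + d) \<otimes>\<^bsub>GZ\<^esub> w"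
  by (simp add: G.m_assoc[symmetric] i2_add)

lemma gen_t_eq: "gen_t = i1 1" by (simp add: gen_t_def fpi1_def)
lemma gen_a_eq: "gen_a = i2 (1,0)" by (simp add: gen_a_def fpi2_def)
lemma gen_b_eq: "gen_b = i2 (0,1)" by (simp add: gen_b_def fpi2_def)

definition F :: "int \<Rightarrow> (int + int \<times> int) list" where
  "F n = (gen_t \<otimes>\<^bsub>GZ\<^esub> gen_a) [^]\<^bsub>GZ\<^esub> n"
definition F' :: "int \<Rightarrow> (int + int \<times> int) list" where
  "F' n = (gen_t \<otimes>\<^bsub>GZ\<^esub> inv\<^bsub>GZ\<^esub> gen_a) [^]\<^bsub>GZ\<^esub> n"

lemma F_hom: "F \<in> hom integer_group GZ"
  unfolding F_def using G.hom_integer_group_pow[of "gen_t \<otimes>\<^bsub>GZ\<^esub> gen_a"]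
  by (simp add: gen_t_eq gen_a_eq)
lemma F'_hom: "F' \<in> hom integer_group GZ"
  unfolding F'_def using G.hom_integer_group_pow[of "gen_t \<otimes>\<^bsub>GZ\<^esub> inv\<^bsub>GZ\<^esub> gen_a"]
  by (simp add: gen_t_eq gen_a_eq)

interpretation phiE: fp2hom integer_group Z2 GZ F i2
  by (intro fp2hom.intro fp2hom_axioms.intro gz.fp2_axioms GZ_group F_hom i2_hom)
interpretation psiE: fp2hom integer_group Z2 GZ F' i2
  by (intro fp2hom.intro fp2hom_axioms.intro gz.fp2_axioms GZ_group F'_hom i2_hom)

abbreviation "psi \<equiv> fpext GZ F' i2"

lemma phi_eq: "phi w = fpext GZ F i2 w"
proof (induction w)
  case Nil then show ?case by (simp add: phi_def)
next
  case (Cons l w)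
  have wc: "fpext GZ F i2 w \<in> carrier GZ"
    by (rule phiE.E_carrier) (auto simp: gz.lcar_def split: sum.splits)
  have "phi (l # w) = phi_letter l \<otimes>\<^bsub>GZ\<^esub> phi w" by (simp add: phi_def)
  also have "\<dots> = case_sum F i2 l \<otimes>\<^bsub>GZ\<^esub> fpext GZ F i2 w"
  proof (cases l)
    case (Inl n)
    have "phi_letter (Inl n) = F n" by (simp add: phi_letter_def F_def)
    then show ?thesis using Cons Inl by simp
  next
    case (Inr p)
    have "[Inr p] \<otimes>\<^bsub>GZ\<^esub> fpext GZ F i2 w = i2 p \<otimes>\<^bsub>GZ\<^esub> fpext GZ F i2 w"
      using wc gz.mult_letter gz.i2_mult by (simp add: GZ_def)
    then show ?thesis using Cons Inr by (simp add: phi_letter_def)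
  qed
  finally show ?case by simp
qed

lemma phi_hom: "phi \<in> hom GZ GZ"
  using phiE.E_hom by (simp add: phi_eq[abs_def] GZ_def)
lemma psi_hom: "psi \<in> hom GZ GZ"
  using psiE.E_hom by (simp add: GZ_def)

lemma phi_i1: "phi (i1 n) = F n" using phiE.E_i1 by (simp add: phi_eq)
lemma phi_i2: "phi (i2 p) = i2 p" using phiE.E_i2[of p] by (simp add: phi_eq)
lemma psi_i1: "psi (i1 n) = F' n" using psiE.E_i1 by simp
lemma psi_i2: "psi (i2 p) = i2 p" using psiE.E_i2[of p] by simp

lemma i1_pow: "i1 n = i1 1 [^]\<^bsub>GZ\<^esub> n"
  using hom_int_pow[OF i1_hom, of 1 n] by simp

lemma phi_t: "phi gen_t = gen_t \<otimes>\<^bsub>GZ\<^esub> gen_a"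
  by (simp add: gen_t_eq phi_i1 F_def gen_a_eq)

lemma phi_t': "phi (i1 1) = i1 1 \<otimes>\<^bsub>GZ\<^esub> i2 (1,0)"
  using phi_t by (simp add: gen_t_eq gen_a_eq)

lemma i1_r_one: "i1 n \<otimes>\<^bsub>GZ\<^esub> [] = i1 n" using G.r_one[of "i1 n"] by (simp add: GZ_one)

lemma phi_pow: "x \<in> carrier GZ \<Longrightarrow> phi (x [^]\<^bsub>GZ\<^esub> (n::int)) = phi x [^]\<^bsub>GZ\<^esub> n"
  by (rule hom_int_pow[OF phi_hom _ GZ_group GZ_group])
lemma psi_pow: "x \<in> carrier GZ \<Longrightarrow> psi (x [^]\<^bsub>GZ\<^esub> (n::int)) = psi x [^]\<^bsub>GZ\<^esub> n"
  by (rule hom_int_pow[OF psi_hom _ GZ_group GZ_group])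

lemma phi_inv: "x \<in> carrier GZ \<Longrightarrow> phi (inv\<^bsub>GZ\<^esub> x) = inv\<^bsub>GZ\<^esub> (phi x)"
  by (rule group_hom.hom_inv) (auto intro: group_hom.intro group_hom_axioms.intro GZ_group phi_hom)
lemma psi_inv: "x \<in> carrier GZ \<Longrightarrow> psi (inv\<^bsub>GZ\<^esub> x) = inv\<^bsub>GZ\<^esub> (psi x)"
  by (rule group_hom.hom_inv) (auto intro: group_hom.intro group_hom_axioms.intro GZ_group psi_hom)

lemma phi_psi: "w \<in> carrier GZ \<Longrightarrow> phi (psi w) = w"
proof -
  assume w: "w \<in> carrier GZ"
  have h: "(\<lambda>x. phi (psi x)) \<in> hom GZ GZ" using hom_compose[OF psi_hom phi_hom] by (simp add: comp_def)
  have "phi (psi w) = id w"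
  proof (rule gz.hom_unique[of GZ "\<lambda>x. phi (psi x)" id w])
    show "(\<lambda>x. phi (psi x)) \<in> hom (free_prod integer_group Z2) GZ" using h by (simp add: GZ_def)
    show "id \<in> hom (free_prod integer_group Z2) GZ" by (simp add: GZ_def[symmetric] id_def hom_def)
    fix n :: int
    have "phi (psi (i1 n)) = (phi gen_t \<otimes>\<^bsub>GZ\<^esub> inv\<^bsub>GZ\<^esub> (phi gen_a)) [^]\<^bsub>GZ\<^esub> n"
      by (simp add: psi_i1 F'_def phi_pow phi_inv hom_mult[OF phi_hom] gen_t_eq gen_a_eq)
    also have "\<dots> = i1 n" by (simp add: phi_t' gen_a_eq gen_t_eq phi_i2 G.m_assoc i1_pow[of n] i2_inv i2_add i1_r_one)
    finally show "phi (psi (i1 n)) = id (i1 n)" by simp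
  next
    fix p show "phi (psi (i2 p)) = id (i2 p)" by (simp add: psi_i2 phi_i2)
  qed (use w GZ_group in \<open>auto simp: GZ_def\<close>)
  then show ?thesis by simp
qed

lemma psi_t: "psi gen_t = gen_t \<otimes>\<^bsub>GZ\<^esub> inv\<^bsub>GZ\<^esub> gen_a"
  by (simp add: gen_t_eq psi_i1 F'_def gen_a_eq)

lemma psi_t': "psi (i1 1) = i1 1 \<otimes>\<^bsub>GZ\<^esub> i2 (-1,0)"
  using psi_t by (simp add: gen_t_eq gen_a_eq i2_inv)

lemma psi_phi: "w \<in> carrier GZ \<Longrightarrow> psi (phi w) = w"
proof -
  assume w: "w \<in> carrier GZ"
  have h: "(\<lambda>x. psi (phi x)) \<in> hom GZ GZ" using hom_compose[OF phi_hom psi_hom] by (simp add: comp_def)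
  have "psi (phi w) = id w"
  proof (rule gz.hom_unique[of GZ "\<lambda>x. psi (phi x)" id w])
    show "(\<lambda>x. psi (phi x)) \<in> hom (free_prod integer_group Z2) GZ" using h by (simp add: GZ_def)
    show "id \<in> hom (free_prod integer_group Z2) GZ" by (simp add: GZ_def[symmetric] id_def hom_def)
    fix n :: int
    have "psi (phi (i1 n)) = (psi gen_t \<otimes>\<^bsub>GZ\<^esub> (psi gen_a)) [^]\<^bsub>GZ\<^esub> n"
      by (simp add: phi_i1 F_def psi_pow hom_mult[OF psi_hom] gen_t_eq gen_a_eq)
    also have "\<dots> = i1 n" by (simp add: psi_t' gen_a_eq gen_t_eq psi_i2 G.m_assoc i1_pow[of n] i2_add i1_r_one)
    finally show "psi (phi (i1 n)) = id (i1 n)" by simp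
  next
    fix p show "psi (phi (i2 p)) = id (i2 p)" by (simp add: psi_i2 phi_i2)
  qed (use w GZ_group in \<open>auto simp: GZ_def\<close>)
  then show ?thesis by simp
qed

lemma phi_iso: "phi \<in> Group.iso GZ GZ"
proof -
  have "bij_betw phi (carrier GZ) (carrier GZ)"
    by (rule bij_betwI[where g = psi]) (use hom_in_carrier[OF phi_hom] hom_in_carrier[OF psi_hom] psi_phi phi_psi in auto)
  then show ?thesis using phi_hom by (simp add: Group.iso_def)
qed



abbreviation FCz where "FCz \<equiv> fp_cons integer_group Z2"

lemma red_Cons: "fp_reduced integer_group Z2 (l # w) \<longleftrightarrow>
   gz.lcar l \<and> gz.nid l \<and> fp_reduced integer_group Z2 w \<and> (w = [] \<or> isl (hd w) \<noteq> isl l)"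
  by (rule gz.red_Cons)

lemma nid_simps[simp]: "gz.nid (Inl x) = (x \<noteq> 0)" "gz.nid (Inr y) = (y \<noteq> (0,0))"
  by (auto simp: gz.nid_def)
lemma lcar_simps[simp]: "gz.lcar l"
  by (auto simp: gz.lcar_def split: sum.splits)

lemma i1_mult: "w \<in> carrier GZ \<Longrightarrow> i1 x \<otimes>\<^bsub>GZ\<^esub> w = FCz (Inl x) w"
  using gz.i1_mult[of w x] by (simp add: GZ_def)
lemma i2_mult: "w \<in> carrier GZ \<Longrightarrow> i2 x \<otimes>\<^bsub>GZ\<^esub> w = FCz (Inr x) w"
  using gz.i2_mult[of w x] by (simp add: GZ_def)
lemma cons_red_eq: "fp_reduced integer_group Z2 (l # w) \<Longrightarrow> FCz l w = l # w"
  by (rule gz.cons_red_eq)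

fun Rl :: "(int \<times> (int \<times> int)) list \<Rightarrow> (int + int \<times> int) list" where
  "Rl [] = []"
| "Rl ((e,h) # r) = i1 e \<otimes>\<^bsub>GZ\<^esub> (i2 h \<otimes>\<^bsub>GZ\<^esub> Rl r)"

definition R :: "int \<times> int \<Rightarrow> (int \<times> (int \<times> int)) list \<Rightarrow> (int + int \<times> int) list" where
  "R h0 xs = i2 h0 \<otimes>\<^bsub>GZ\<^esub> Rl xs"

lemma GZ_r_one[simp]: "x \<in> carrier GZ \<Longrightarrow> x \<otimes>\<^bsub>GZ\<^esub> [] = x"
  using G.r_one by (simp add: GZ_one)
lemma GZ_l_one[simp]: "x \<in> carrier GZ \<Longrightarrow> [] \<otimes>\<^bsub>GZ\<^esub> x = x"
  using G.l_one by (simp add: GZ_one)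
lemma GZ_nil[simp]: "[] \<in> carrier GZ" by (simp add: GZ_carrier)

lemma Rl_c[simp]: "Rl xs \<in> carrier GZ"
  by (induction xs rule: Rl.induct) (auto simp: GZ_one)
lemma R_c[simp]: "R h xs \<in> carrier GZ" by (simp add: R_def)

lemma Rl_Cons: "Rl ((e,h) # r) = i1 e \<otimes>\<^bsub>GZ\<^esub> R h r" by (simp add: R_def)

fun D :: "(int + int \<times> int) list \<Rightarrow> (int \<times> int) \<times> (int \<times> (int \<times> int)) list" where
  "D [] = ((0,0), [])"
| "D (Inr h # w) = (h, snd (D w))"
| "D (Inl n # w) = ((0,0), replicate (nat \<bar>n\<bar> - 1) (sgn n, (0,0)) @ (sgn n, fst (D w)) # snd (D w))"

fun vl :: "(int \<times> (int \<times> int)) list \<Rightarrow> bool" where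
  "vl [] = True"
| "vl [(e,h)] = (e = 1 \<or> e = -1)"
| "vl ((e,h) # (e',h') # r) = ((e = 1 \<or> e = -1) \<and> (h = (0,0) \<longrightarrow> e' = e) \<and> vl ((e',h') # r))"

lemma vl_Cons: "vl ((e,h) # r) \<longleftrightarrow> (e = 1 \<or> e = -1) \<and> vl r \<and> (r \<noteq> [] \<and> h = (0,0) \<longrightarrow> fst (hd r) = e)"
  by (cases r) auto

declare vl.simps(2,3)[simp del]

lemma vl_rep: "s = 1 \<or> s = -1 \<Longrightarrow> vl ys \<Longrightarrow> (ys \<noteq> [] \<and> h = (0,0) \<longrightarrow> fst (hd ys) = s) \<Longrightarrow>
   vl (replicate k (s,(0,0)) @ (s,h) # ys)"
proof (induction k)
  case 0 then show ?case by (simp add: vl_Cons)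
next
  case (Suc k)
  have "fst (hd (replicate k (s,(0::int,0::int)) @ (s,h) # ys)) = s" by (cases k) auto
  then show ?case using Suc by (simp add: vl_Cons)
qed

lemma D_fst_Inr: "fp_reduced integer_group Z2 (Inr h # w) \<Longrightarrow> fst (D (Inr h # w)) \<noteq> (0,0)"
  by (simp add: red_Cons)

lemma D_valid: "fp_reduced integer_group Z2 w \<Longrightarrow> vl (snd (D w))"
proof (induction w rule: D.induct)
  case (2 h w)
  then show ?case by (simp add: red_Cons)
next
  case (3 n w)
  have w: "fp_reduced integer_group Z2 w" and n: "n \<noteq> 0" and hw: "w = [] \<or> \<not> isl (hd w)"
    using 3(3) by (auto simp: red_Cons)
  note IH = 3(1)
  have "w \<noteq> [] \<Longrightarrow> fst (D w) \<noteq> (0,0)"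
    using hw w by (cases w rule: D.cases) (auto simp: red_Cons)
  moreover have "w = [] \<Longrightarrow> snd (D w) = []" by simp
  ultimately show ?case using IH[OF w] n
    by (cases "w = []") (auto intro!: vl_rep simp: sgn_if)
qed simp

lemma D_fst0: "w \<in> carrier GZ \<Longrightarrow> fst (D w) = (0,0) \<Longrightarrow> w = [] \<or> isl (hd w)"
  by (cases w rule: D.cases) (auto simp: GZ_carrier red_Cons)

lemma D_Inr: assumes "v \<in> carrier GZ" "fst (D v) = (0,0)"
  shows "D (FCz (Inr h0) v) = (h0, snd (D v))"
proof -
  have "v = [] \<or> isl (hd v)" using D_fst0 assms by blast
  then show ?thesis using assms
    by (cases v rule: D.cases) auto
qed

lemma D_Inl: assumes w: "w \<in> carrier GZ" and Dw: "D w = (h, r)" and e: "e = 1 \<or> e = -1"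
  and v: "vl ((e,h) # r)"
  shows "D (FCz (Inl e) w) = ((0,0), (e,h) # r)"
proof (cases w rule: D.cases)
  case 1
  then show ?thesis using Dw e by auto
next
  case (2 h' w')
  then show ?thesis using Dw e by auto
next
  case (3 m w')
  have m: "m \<noteq> 0" using w 3 by (simp add: GZ_carrier red_Cons)
  have h: "h = (0,0)" and r: "r = replicate (nat \<bar>m\<bar> - 1) (sgn m, (0,0)) @ (sgn m, fst (D w')) # snd (D w')"
    using Dw 3 by auto
  have "fst (hd r) = sgn m" using r by (cases "nat \<bar>m\<bar> - 1") auto
  then have sm: "sgn m = e" using v h r by (simp add: vl_Cons)
  then have em: "e + m \<noteq> 0" "sgn (e + m) = e" "nat \<bar>e + m\<bar> - 1 = nat \<bar>m\<bar>"
    using e m by (auto simp: sgn_if split: if_splits)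
  have rep: "replicate (nat \<bar>m\<bar>) (e, (0::int,0::int)) = (e,(0,0)) # replicate (nat \<bar>m\<bar> - 1) (e,(0,0))"
    using m by (cases "nat \<bar>m\<bar>") auto
  show ?thesis using 3 em h r sm rep by simp
qed

lemma DR: "vl xs \<Longrightarrow> D (R h0 xs) = (h0, xs)"
proof (induction xs arbitrary: h0)
  case Nil
  have "R h0 [] = i2 h0" using GZ_r_one[OF i2_c] by (simp add: R_def)
  then show ?case by (auto simp: fpi2_def)
next
  case (Cons x r)
  obtain e h where x: "x = (e,h)" by (cases x)
  have e: "e = 1 \<or> e = -1" and vr: "vl r" using Cons.prems x by (auto simp: vl_Cons)
  have IH: "D (R h r) = (h, r)" using Cons.IH[OF vr] .
  have "R h0 (x # r) = i2 h0 \<otimes>\<^bsub>GZ\<^esub> (i1 e \<otimes>\<^bsub>GZ\<^esub> R h r)" by (simp add: R_def x)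
  also have "\<dots> = FCz (Inr h0) (FCz (Inl e) (R h r))"
  proof -
    have "i1 e \<otimes>\<^bsub>GZ\<^esub> R h r \<in> carrier GZ" by simp
    then show ?thesis using i1_mult[of "R h r" e] i2_mult[of "i1 e \<otimes>\<^bsub>GZ\<^esub> R h r" h0] by simp
  qed
  finally have eq: "R h0 (x # r) = FCz (Inr h0) (FCz (Inl e) (R h r))" .
  have DI: "D (FCz (Inl e) (R h r)) = ((0,0), (e,h) # r)"
    using D_Inl[OF R_c IH e] Cons.prems x by simp
  have "FCz (Inl e) (R h r) \<in> carrier GZ" using i1_mult[of "R h r" e, symmetric] by simp
  then show ?case using eq D_Inr[of "FCz (Inl e) (R h r)" h0] DI x by simp
qed

lemma Rl_rep: "Rl (replicate k (s,(0,0)) @ ys) = i1 (int k * s) \<otimes>\<^bsub>GZ\<^esub> Rl ys"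
proof (induction k)
  case 0 then show ?case using G.l_one[of "Rl ys"] by (simp add: GZ_one)
next
  case (Suc k)
  have "Rl (replicate (Suc k) (s,(0,0)) @ ys) = i1 s \<otimes>\<^bsub>GZ\<^esub> (i1 (int k * s) \<otimes>\<^bsub>GZ\<^esub> Rl ys)"
    using Suc G.l_one[of "Rl (replicate k (s, 0, 0) @ ys)"] by (simp add: GZ_one)
  also have "\<dots> = i1 (int (Suc k) * s) \<otimes>\<^bsub>GZ\<^esub> Rl ys" by (simp add: i1_assoc algebra_simps)
  finally show ?case .
qed

lemma R0: "R (0,0) xs = Rl xs" by (simp add: R_def)

lemma RD: "w \<in> carrier GZ \<Longrightarrow> R (fst (D w)) (snd (D w)) = w"
proof (induction w rule: D.induct)
  case 1 then show ?case by (simp add: R_def fpi2_def GZ_one)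
next
  case (2 h w)
  have w: "w \<in> carrier GZ" and red: "fp_reduced integer_group Z2 (Inr h # w)"
    using 2(2) by (auto simp: GZ_carrier red_Cons)
  have "fst (D w) = (0,0)" using red by (cases w rule: D.cases) (auto simp: red_Cons)
  then have "Rl (snd (D w)) = w" using 2(1)[OF w] G.l_one[of "Rl (snd (D w))"] by (simp add: R_def GZ_one)
  then show ?case using red i2_mult[OF w] cons_red_eq by (simp add: R_def)
next
  case (3 n w)
  have w: "w \<in> carrier GZ" and red: "fp_reduced integer_group Z2 (Inl n # w)" and n: "n \<noteq> 0"
    using 3(3) by (auto simp: GZ_carrier red_Cons)
  have "R (fst (D (Inl n # w))) (snd (D (Inl n # w)))
      = i1 (int (nat \<bar>n\<bar> - 1) * sgn n) \<otimes>\<^bsub>GZ\<^esub> (i1 (sgn n) \<otimes>\<^bsub>GZ\<^esub> w)"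
    using 3(1)[OF w] by (simp add: R0 Rl_rep Rl_Cons del: Rl.simps)
  also have "\<dots> = i1 n \<otimes>\<^bsub>GZ\<^esub> w"
  proof -
    have "int (nat \<bar>n\<bar> - 1) * sgn n + sgn n = n" using n
      by (cases "n > 0") (auto simp: sgn_if algebra_simps)
    then show ?thesis using w by (simp add: i1_assoc)
  qed
  also have "\<dots> = Inl n # w" using i1_mult[OF w] cons_red_eq[OF red] by simp
  finally show ?case .
qed



fun fmi :: "(int \<times> (int \<times> int)) list \<Rightarrow> int" where
  "fmi [] = 0"
| "fmi ((e,h) # r) = (if e = -1 then 1 else 0)"

fun Phl :: "(int \<times> (int \<times> int)) list \<Rightarrow> (int \<times> (int \<times> int)) list" where
  "Phl [] = []"
| "Phl ((e,(h1,h2)) # r) = (e, (h1 + (if e = 1 then 1 else 0) - fmi r, h2)) # Phl r"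

lemma phi_tinv: "phi (i1 (-1)) = i2 (-1,0) \<otimes>\<^bsub>GZ\<^esub> i1 (-1)"
proof -
  have "phi (i1 (-1)) = phi (inv\<^bsub>GZ\<^esub> (i1 1))" by (simp add: i1_inv)
  also have "\<dots> = inv\<^bsub>GZ\<^esub> (i1 1 \<otimes>\<^bsub>GZ\<^esub> i2 (1,0))" by (simp add: phi_inv phi_t')
  also have "\<dots> = i2 (-1,0) \<otimes>\<^bsub>GZ\<^esub> i1 (-1)" by (simp add: G.inv_mult_group i1_inv i2_inv)
  finally show ?thesis .
qed

lemma phi_mult: "x \<in> carrier GZ \<Longrightarrow> y \<in> carrier GZ \<Longrightarrow> phi (x \<otimes>\<^bsub>GZ\<^esub> y) = phi x \<otimes>\<^bsub>GZ\<^esub> phi y"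
  by (rule hom_mult[OF phi_hom])

lemma phi_Rl: "(\<forall>x\<in>set xs. fst x = 1 \<or> fst x = -1) \<Longrightarrow> phi (Rl xs) = i2 (- fmi xs, 0) \<otimes>\<^bsub>GZ\<^esub> Rl (Phl xs)"
proof (induction xs rule: Phl.induct)
  case 1 then show ?case by (simp add: phi_def GZ_one)
next
  case (2 e h1 h2 r)
  have IH: "phi (Rl r) = i2 (- fmi r, 0) \<otimes>\<^bsub>GZ\<^esub> Rl (Phl r)" using 2 by simp
  have "phi (Rl ((e,(h1,h2)) # r)) = phi (i1 e) \<otimes>\<^bsub>GZ\<^esub> (i2 (h1 - fmi r, h2) \<otimes>\<^bsub>GZ\<^esub> Rl (Phl r))"
    by (simp add: phi_mult IH phi_i2 i2_assoc)
  also have "\<dots> = i2 (- fmi ((e,(h1,h2)) # r), 0) \<otimes>\<^bsub>GZ\<^esub> Rl (Phl ((e,(h1,h2)) # r))"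
  proof (cases "e = 1")
    case True
    then show ?thesis by (simp add: phi_t' G.m_assoc i2_assoc algebra_simps)
  next
    case False
    then have "e = -1" using 2(2) by simp
    then show ?thesis by (simp add: phi_tinv G.m_assoc i2_assoc algebra_simps)
  qed
  finally show ?case .
qed

lemma vl_set: "vl xs \<Longrightarrow> \<forall>x\<in>set xs. fst x = 1 \<or> fst x = -1"
  by (induction xs rule: vl.induct) (auto simp: vl.simps)

lemma phi_R: "vl xs \<Longrightarrow> phi (R h0 xs) = R (fst h0 - fmi xs, snd h0) (Phl xs)"
proof -
  assume v: "vl xs"
  obtain a b where h0: "h0 = (a,b)" by (cases h0)
  show ?thesis using phi_Rl[OF vl_set[OF v]]
    by (simp add: R_def phi_mult phi_i2 h0 i2_assoc)
qed

lemma Phl_nil: "Phl r = [] \<longleftrightarrow> r = []"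
  by (cases r rule: Phl.cases) auto
lemma Phl_hd: "r \<noteq> [] \<Longrightarrow> fst (hd (Phl r)) = fst (hd r)"
  by (cases r rule: Phl.cases) auto

lemma Phl_valid: "vl xs \<Longrightarrow> vl (Phl xs)"
proof (induction xs rule: Phl.induct)
  case (2 e h1 h2 r)
  have e: "e = 1 \<or> e = -1" and vr: "vl r" and c: "r \<noteq> [] \<and> (h1,h2) = (0,0) \<longrightarrow> fst (hd r) = e"
    using 2(2) by (auto simp: vl_Cons)
  show ?case
  proof (cases r)
    case Nil then show ?thesis using e by (simp add: vl_Cons)
  next
    case (Cons y r')
    obtain e' h' where y: "y = (e',h')" by (cases y)
    have e': "e' = 1 \<or> e' = -1" using vr Cons y by (simp add: vl_Cons)
    show ?thesis using 2(1)[OF vr] e e' c Cons y Phl_hd[of r] Phl_nil[of r]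
      by (auto simp: vl_Cons)
  qed
qed simp

fun alt :: "(int \<times> (int \<times> int)) list \<Rightarrow> bool" where
  "alt [] = True"
| "alt [x] = False"
| "alt (x # y # r) = (fst x = 1 \<and> fst y = -1 \<and> alt r)"

lemma fix_alt: "(\<forall>x\<in>set xs. fst x = 1 \<or> fst x = -1) \<Longrightarrow> Phl xs = xs \<Longrightarrow> fmi xs = 0 \<Longrightarrow> alt xs"
proof (induction xs rule: alt.induct)
  case (2 x)
  obtain e h1 h2 where x: "x = (e,(h1,h2))" by (metis prod.exhaust)
  then show ?case using 2 by (auto split: if_splits)
next
  case (3 x y r)
  obtain e h1 h2 where x: "x = (e,(h1,h2))" by (metis prod.exhaust)
  obtain e' h1' h2' where y: "y = (e',(h1',h2'))" by (metis prod.exhaust)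
  have "e = 1" using 3(2,4) x by (auto split: if_splits)
  moreover have "e' = -1" using 3(3) x y \<open>e = 1\<close> by (auto split: if_splits)
  moreover have "fmi r = 0" "Phl r = r" using 3(3) x y \<open>e' = -1\<close> by (auto split: if_splits)
  ultimately show ?case using 3 x y by simp
qed simp

abbreviation "Aab \<equiv> generate GZ {gen_a, gen_b}"
abbreviation "conjt \<equiv> (\<lambda>x. gen_t \<otimes>\<^bsub>GZ\<^esub> x \<otimes>\<^bsub>GZ\<^esub> inv\<^bsub>GZ\<^esub> gen_t)"
abbreviation "Sg \<equiv> generate GZ (Aab \<union> conjt ` Aab)"

lemma ab_c: "{gen_a, gen_b} \<subseteq> carrier GZ" by (simp add: gen_a_eq gen_b_eq)

lemma i2_in_A: "i2 p \<in> Aab"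
proof -
  obtain i j where p: "p = (i,j)" by (cases p)
  have ha: "(\<lambda>n. i2 (n,0)) \<in> hom integer_group GZ"
  proof -
    have "(\<lambda>n::int. (n,0::int)) \<in> hom integer_group Z2" by (rule homI) auto
    then show ?thesis using hom_compose[OF _ i2_hom] by (simp add: comp_def)
  qed
  have hb: "(\<lambda>n. i2 (0,n)) \<in> hom integer_group GZ"
  proof -
    have "(\<lambda>n::int. (0::int,n)) \<in> hom integer_group Z2" by (rule homI) auto
    then show ?thesis using hom_compose[OF _ i2_hom] by (simp add: comp_def)
  qed
  have "i2 (i,0) = gen_a [^]\<^bsub>GZ\<^esub> i"
    using hom_int_pow[OF ha, of 1 i] by (simp add: gen_a_eq)
  moreover have "i2 (0,j) = gen_b [^]\<^bsub>GZ\<^esub> j"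
    using hom_int_pow[OF hb, of 1 j] by (simp add: gen_b_eq)
  moreover have "i2 (i,j) = i2 (i,0) \<otimes>\<^bsub>GZ\<^esub> i2 (0,j)" by (simp add: i2_add)
  moreover have "gen_a [^]\<^bsub>GZ\<^esub> i \<in> Aab" "gen_b [^]\<^bsub>GZ\<^esub> j \<in> Aab"
    using G.subgroup_int_pow_closed[OF G.generate_is_subgroup[OF ab_c]] generate.incl[of _ "{gen_a, gen_b}" GZ]
    by auto
  ultimately show ?thesis using p generate.eng by metis
qed

lemma A_range: "Aab = range i2"
proof
  have gh: "group_hom Z2 GZ i2" by (intro group_hom.intro group_hom_axioms.intro Z2_group GZ_group i2_hom)
  have "subgroup (range i2) GZ" using group_hom.img_is_subgroup[OF gh] by simp
  then show "Aab \<subseteq> range i2"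
    by (rule G.generate_subgroup_incl[rotated]) (auto simp: gen_a_eq gen_b_eq)
qed (auto intro: i2_in_A)

lemma Rl_alt: "alt xs \<Longrightarrow> Rl xs \<in> Sg"
proof (induction xs rule: alt.induct)
  case 1 then show ?case by (simp add: generate.one[of GZ, simplified GZ_one])
next
  case (3 x y r)
  obtain e h where x: "x = (e,h)" by (cases x)
  obtain e' h' where y: "y = (e',h')" by (cases y)
  have e: "e = 1" "e' = -1" and r: "alt r" using 3(2) x y by auto
  have "Rl (x # y # r) = conjt (i2 h) \<otimes>\<^bsub>GZ\<^esub> (i2 h' \<otimes>\<^bsub>GZ\<^esub> Rl r)"
    by (simp add: x y e gen_t_eq i1_inv G.m_assoc)
  moreover have "conjt (i2 h) \<in> Sg" using i2_in_A by (intro generate.incl) auto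
  moreover have "i2 h' \<in> Sg" using i2_in_A by (intro generate.incl) auto
  ultimately show ?case using 3(1)[OF r] generate.eng by metis
qed simp

lemma Fix_sub: "subgroup (Fix GZ phi) GZ"
proof (rule G.subgroupI)
  show "Fix GZ phi \<subseteq> carrier GZ" by (auto simp: Fix_def)
  show "Fix GZ phi \<noteq> {}" using G.one_closed by (auto simp: Fix_def GZ_one phi_def)
  fix a assume "a \<in> Fix GZ phi" then show "inv\<^bsub>GZ\<^esub> a \<in> Fix GZ phi" by (auto simp: Fix_def phi_inv)
next
  fix a b assume "a \<in> Fix GZ phi" "b \<in> Fix GZ phi"
  then show "a \<otimes>\<^bsub>GZ\<^esub> b \<in> Fix GZ phi" by (auto simp: Fix_def phi_mult)
qed

lemma Fix_eq: "Fix GZ phi = Sg"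
proof
  show "Sg \<subseteq> Fix GZ phi"
  proof (rule G.generate_subgroup_incl[OF _ Fix_sub])
    have "phi (i2 p) = i2 p" for p by (rule phi_i2)
    moreover have "phi (conjt (i2 p)) = conjt (i2 p)" for p
    proof -
      obtain i j where p: "p = (i,j)" by (cases p)
      show ?thesis
        by (simp add: gen_t_eq phi_mult i1_inv phi_tinv phi_t' phi_i2 G.m_assoc i2_assoc p)
    qed
    ultimately show "Aab \<union> conjt ` Aab \<subseteq> Fix GZ phi"
      unfolding A_range by (auto simp: Fix_def gen_t_eq i1_inv)
  qed
next
  show "Fix GZ phi \<subseteq> Sg"
  proof
    fix w assume "w \<in> Fix GZ phi"
    then have w: "w \<in> carrier GZ" and pw: "phi w = w" by (auto simp: Fix_def)
    define h0 xs where "h0 = fst (D w)" and "xs = snd (D w)"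
    have v: "vl xs" using D_valid w by (simp add: xs_def GZ_carrier)
    have wR: "w = R h0 xs" using RD[OF w] by (simp add: h0_def xs_def)
    have "D w = (h0, xs)" by (simp add: h0_def xs_def)
    moreover have "D (phi w) = ((fst h0 - fmi xs, snd h0), Phl xs)"
      using wR phi_R[OF v] DR[OF Phl_valid[OF v]] by simp
    ultimately have "fmi xs = 0" "Phl xs = xs" using pw by (auto simp: prod_eq_iff)
    then have "alt xs" using fix_alt vl_set[OF v] by blast
    then have "Rl xs \<in> Sg" by (rule Rl_alt)
    moreover have "i2 h0 \<in> Sg" using i2_in_A by (intro generate.incl) auto
    ultimately show "w \<in> Sg" using wR generate.eng by (metis R_def)
  qed
qed



interpretation f22: fp2 Z2 Z2 by (intro fp2.intro Z2_group)

abbreviation "FP2 \<equiv> free_prod Z2 Z2"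

lemma FP2_group: "group FP2" by (rule f22.FP_group)

definition cj :: "int \<times> int \<Rightarrow> (int + int \<times> int) list" where
  "cj p = i1 1 \<otimes>\<^bsub>GZ\<^esub> i2 p \<otimes>\<^bsub>GZ\<^esub> i1 (-1)"

lemma cj_hom: "cj \<in> hom Z2 GZ"
proof (rule homI)
  fix x assume "x \<in> carrier Z2" then show "cj x \<in> carrier GZ" by (simp add: cj_def)
next
  fix x y assume "x \<in> carrier Z2" "y \<in> carrier Z2"
  obtain a b where x: "x = (a,b)" by (cases x)
  obtain c d where y: "y = (c,d)" by (cases y)
  show "cj (x \<otimes>\<^bsub>Z2\<^esub> y) = cj x \<otimes>\<^bsub>GZ\<^esub> cj y"
    by (simp add: cj_def x y G.m_assoc i1_assoc i2_assoc)
qed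

interpretation kE: fp2hom Z2 Z2 GZ i2 cj
  by (intro fp2hom.intro fp2hom_axioms.intro f22.fp2_axioms GZ_group i2_hom cj_hom)

abbreviation "kap \<equiv> fpext GZ i2 cj"

fun T :: "((int \<times> int) + (int \<times> int)) list \<Rightarrow> (int \<times> int) \<times> (int \<times> (int \<times> int)) list" where
  "T [] = ((0,0), [])"
| "T (Inl h # u) = (h, snd (T u))"
| "T (Inr h # u) = ((0,0), (1,h) # (-1, fst (T u)) # snd (T u))"

lemma red2_Cons: "fp_reduced Z2 Z2 (l # w) \<longleftrightarrow>
   f22.lcar l \<and> f22.nid l \<and> fp_reduced Z2 Z2 w \<and> (w = [] \<or> isl (hd w) \<noteq> isl l)"
  by (rule f22.red_Cons)

lemma nid2_simps[simp]: "f22.nid (Inl x) = (x \<noteq> (0,0))" "f22.nid (Inr y) = (y \<noteq> (0,0))"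
  by (auto simp: f22.nid_def)
lemma lcar2_simps[simp]: "f22.lcar l"
  by (auto simp: f22.lcar_def split: sum.splits)

lemma kap_T: "fp_reduced Z2 Z2 u \<Longrightarrow> kap u = R (fst (T u)) (snd (T u))"
proof (induction u rule: T.induct)
  case 1 then show ?case by (simp add: R_def GZ_one)
next
  case (2 h u)
  have u: "fp_reduced Z2 Z2 u" and hu: "u = [] \<or> \<not> isl (hd u)" using 2(2) by (auto simp: red2_Cons)
  have "fst (T u) = (0,0)" using hu by (cases u rule: T.cases) auto
  then show ?case using 2(1)[OF u] by (simp add: R_def)
next
  case (3 h u)
  have u: "fp_reduced Z2 Z2 u" using 3(3) by (auto simp: red2_Cons)
  show ?case using 3(1)[OF u] by (simp add: R_def cj_def G.m_assoc)
qed

lemma T_valid: "fp_reduced Z2 Z2 u \<Longrightarrow> vl (snd (T u))"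
proof (induction u rule: T.induct)
  case (2 h u)
  then show ?case by (simp add: red2_Cons)
next
  case (3 h u)
  have u: "fp_reduced Z2 Z2 u" and h: "h \<noteq> (0,0)" and hu: "u = [] \<or> isl (hd u)"
    using 3(3) by (auto simp: red2_Cons)
  have "u \<noteq> [] \<Longrightarrow> fst (T u) \<noteq> (0,0)" using hu u by (cases u rule: T.cases) (auto simp: red2_Cons)
  then show ?case using 3(1)[OF u] h by (cases "u = []") (auto simp: vl_Cons)
qed simp

lemma kap_inj0: "fp_reduced Z2 Z2 u \<Longrightarrow> kap u = [] \<Longrightarrow> u = []"
proof -
  assume u: "fp_reduced Z2 Z2 u" and k: "kap u = []"
  have "D (kap u) = T u" using kap_T[OF u] DR[OF T_valid[OF u]] by simp
  then have "T u = ((0,0), [])" using k by simp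
  then show "u = []" using u by (cases u rule: T.cases) (auto simp: red2_Cons)
qed

lemma kap_hom: "kap \<in> hom FP2 GZ" by (rule kE.E_hom)

lemma conjt_eq: "conjt x = i1 1 \<otimes>\<^bsub>GZ\<^esub> x \<otimes>\<^bsub>GZ\<^esub> i1 (-1)"
  by (simp add: gen_t_eq i1_inv)

lemma kap_img: "kap ` carrier FP2 = Fix GZ phi"
proof
  show "kap ` carrier FP2 \<subseteq> Fix GZ phi"
  proof
    fix x assume "x \<in> kap ` carrier FP2"
    then obtain u where u: "fp_reduced Z2 Z2 u" and x: "x = kap u" by auto
    have "kap u \<in> Sg" using u
    proof (induction u)
      case Nil then show ?case by (simp add: generate.one)
    next
      case (Cons l u)
      have u: "fp_reduced Z2 Z2 u" using Cons.prems by (simp add: red2_Cons)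
      have "case_sum i2 cj l \<in> Sg"
      proof (cases l)
        case (Inl p)
        have "i2 p \<in> Sg" using i2_in_A[of p] by (intro generate.incl) auto
        then show ?thesis using Inl by simp
      next
        case (Inr p)
        have "cj p = conjt (i2 p)" by (simp add: cj_def conjt_eq)
        moreover have "conjt (i2 p) \<in> Sg" using i2_in_A[of p] by (intro generate.incl) auto
        ultimately show ?thesis using Inr by simp
      qed
      then show ?case using Cons.IH[OF u] generate.eng by simp
    qed
    then show "x \<in> Fix GZ phi" using x Fix_eq by simp
  qed
next
  have gh: "group_hom FP2 GZ kap" by (intro group_hom.intro group_hom_axioms.intro FP2_group GZ_group kap_hom)
  have sub: "subgroup (kap ` carrier FP2) GZ" by (rule group_hom.img_is_subgroup[OF gh])
  have "Sg \<subseteq> kap ` carrier FP2"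
  proof (rule G.generate_subgroup_incl[OF _ sub])
    have "i2 p \<in> kap ` carrier FP2" for p
      using kE.E_i1[of p] f22.i1_carrier[of p] by (auto intro!: image_eqI[where x = "fpi1 Z2 p"])
    moreover have "conjt (i2 p) \<in> kap ` carrier FP2" for p
      using kE.E_i2[of p] f22.i2_carrier[of p] by (auto simp: cj_def conjt_eq intro!: image_eqI[where x = "fpi2 Z2 p"])
    ultimately show "Aab \<union> conjt ` Aab \<subseteq> kap ` carrier FP2" unfolding A_range by auto
  qed
  then show "Fix GZ phi \<subseteq> kap ` carrier FP2" using Fix_eq by simp
qed

lemma kap_iso: "kap \<in> Group.iso FP2 (GZ\<lparr>carrier := Fix GZ phi\<rparr>)"
proof -
  have gh: "group_hom FP2 GZ kap" by (intro group_hom.intro group_hom_axioms.intro FP2_group GZ_group kap_hom)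
  have "kernel FP2 GZ kap = {\<one>\<^bsub>FP2\<^esub>}"
    using kap_inj0 group.subgroup_self[OF FP2_group] hom_one[OF kap_hom FP2_group GZ_group]
    by (auto simp: kernel_def GZ_one)
  then have inj: "inj_on kap (carrier FP2)" using group_hom.inj_iff_trivial_ker[OF gh] by simp
  have "kap \<in> hom FP2 (GZ\<lparr>carrier := Fix GZ phi\<rparr>)"
    using kap_hom kap_img by (auto simp: hom_def)
  moreover have "bij_betw kap (carrier FP2) (carrier (GZ\<lparr>carrier := Fix GZ phi\<rparr>))"
    using inj kap_img by (simp add: bij_betw_def)
  ultimately show ?thesis by (simp add: Group.iso_def)
qed

lemma Fix_iso: "GZ\<lparr>carrier := Fix GZ phi\<rparr> \<cong> FP2"
  using group.iso_sym[OF FP2_group] kap_iso by (auto simp: is_iso_def)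



definition V :: "(nat \<Rightarrow> bool) monoid" where
  "V = \<lparr>carrier = UNIV, monoid.mult = (\<lambda>f g i. f i \<noteq> g i), one = (\<lambda>i. False)\<rparr>"

lemma V_simps[simp]: "carrier V = UNIV" "x \<otimes>\<^bsub>V\<^esub> y = (\<lambda>i. x i \<noteq> y i)" "\<one>\<^bsub>V\<^esub> = (\<lambda>i. False)"
  by (auto simp: V_def)

lemma V_group: "group V"
  by (rule groupI) (auto simp: fun_eq_iff)

lemma V_inv[simp]: "inv\<^bsub>V\<^esub> x = x"
  by (rule group.inv_equality[OF V_group]) (auto simp: fun_eq_iff)

definition xsum :: "(nat \<Rightarrow> bool) set \<Rightarrow> nat \<Rightarrow> bool" where
  "xsum A = (\<lambda>i. odd (card {f\<in>A. f i}))"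

lemma card_sd: "finite A \<Longrightarrow> finite B \<Longrightarrow> odd (card ((A - B) \<union> (B - A))) \<longleftrightarrow> (odd (card A) \<noteq> odd (card B))"
proof -
  assume A: "finite A" and B: "finite B"
  have "card ((A - B) \<union> (A \<inter> B)) = card (A - B) + card (A \<inter> B)"
    using A by (intro card_Un_disjoint) auto
  moreover have "(A - B) \<union> (A \<inter> B) = A" by auto
  ultimately have a: "card A = card (A - B) + card (A \<inter> B)" by simp
  have "card ((B - A) \<union> (A \<inter> B)) = card (B - A) + card (A \<inter> B)"
    using B by (intro card_Un_disjoint) auto
  moreover have "(B - A) \<union> (A \<inter> B) = B" by auto
  ultimately have b: "card B = card (B - A) + card (A \<inter> B)" by simp
  have c: "card ((A - B) \<union> (B - A)) = card (A - B) + card (B - A)"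
    using A B by (intro card_Un_disjoint) auto
  show ?thesis using a b c by presburger
qed

lemma xsum_mult: "finite A \<Longrightarrow> finite B \<Longrightarrow> xsum A \<otimes>\<^bsub>V\<^esub> xsum B = xsum ((A - B) \<union> (B - A))"
proof -
  assume A: "finite A" and B: "finite B"
  have "odd (card {f\<in>(A - B) \<union> (B - A). f i}) \<longleftrightarrow> (odd (card {f\<in>A. f i}) \<noteq> odd (card {f\<in>B. f i}))" for i
  proof -
    have "{f\<in>(A - B) \<union> (B - A). f i} = ({f\<in>A. f i} - {f\<in>B. f i}) \<union> ({f\<in>B. f i} - {f\<in>A. f i})" by auto
    then show ?thesis using card_sd[of "{f\<in>A. f i}" "{f\<in>B. f i}"] A B by simp
  qed
  then show ?thesis by (auto simp: xsum_def fun_eq_iff)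
qed

lemma gen_span: assumes Y: "finite Y" shows "generate V Y \<subseteq> xsum ` Pow Y"
proof
  fix x assume "x \<in> generate V Y"
  then show "x \<in> xsum ` Pow Y"
  proof (induction x rule: generate.induct)
    case one
    have "xsum {} = \<one>\<^bsub>V\<^esub>" by (auto simp: xsum_def)
    then show ?case by force
  next
    case (incl h)
    have "{f\<in>{h}. f i} = (if h i then {h} else {})" for i by auto
    then have "xsum {h} = h" by (auto simp: xsum_def fun_eq_iff)
    then show ?case using incl by force
  next
    case (inv h)
    have "{f\<in>{h}. f i} = (if h i then {h} else {})" for i by auto
    then have "xsum {h} = h" by (auto simp: xsum_def fun_eq_iff)
    then show ?case using inv by force
  next
    case (eng h1 h2)
    obtain A B where "A \<subseteq> Y" "B \<subseteq> Y" "h1 = xsum A" "h2 = xsum B" using eng by auto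
    moreover have "finite A" "finite B" using calculation Y finite_subset by auto
    ultimately show ?case using xsum_mult by (auto intro!: image_eqI)
  qed
qed

lemma rank_lb:
  assumes G: "group G" and h: "h \<in> hom G V" and S: "S \<subseteq> carrier G" "finite S" "generate G S = carrier G"
    and TT: "TT \<subseteq> h ` carrier G"
  shows "card TT \<le> 2 ^ card S"
proof -
  have gh: "group_hom G V h" by (intro group_hom.intro group_hom_axioms.intro G V_group h)
  have "h ` carrier G = generate V (h ` S)" using group_hom.generate_img[OF gh S(1)] S(3) by simp
  also have "\<dots> \<subseteq> xsum ` Pow (h ` S)" using gen_span S(2) by simp
  finally have sub: "TT \<subseteq> xsum ` Pow (h ` S)" using TT by auto
  have "card TT \<le> card (xsum ` Pow (h ` S))" using sub S(2) by (intro card_mono) auto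
  also have "\<dots> \<le> card (Pow (h ` S))" using S(2) by (intro card_image_le) auto
  also have "\<dots> = 2 ^ card (h ` S)" using S(2) by (simp add: card_Pow)
  also have "\<dots> \<le> 2 ^ card S" using S(2) by (intro power_increasing card_image_le) auto
  finally show ?thesis .
qed

lemma rank_eq:
  assumes "S0 \<subseteq> carrier G" "finite S0" "card S0 = k" "generate G S0 = carrier G"
    and "\<And>S. S \<subseteq> carrier G \<Longrightarrow> finite S \<Longrightarrow> generate G S = carrier G \<Longrightarrow> (2::nat) ^ k \<le> 2 ^ card S"
  shows "group_rank G = k"
  unfolding group_rank_def
proof (rule Least_equality)
  show "\<exists>S. S \<subseteq> carrier G \<and> finite S \<and> card S = k \<and> generate G S = carrier G" using assms by blast
next
  fix n assume "\<exists>S. S \<subseteq> carrier G \<and> finite S \<and> card S = n \<and> generate G S = carrier G"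
  then obtain S where "S \<subseteq> carrier G" "finite S" "card S = n" "generate G S = carrier G" by blast
  then have "(2::nat) ^ k \<le> 2 ^ n" using assms(5) by blast
  then show "k \<le> n" by simp
qed

lemma card_T: "card ((\<lambda>A i. i \<in> A) ` Pow (B::nat set)) = 2 ^ card B" if "finite B"
proof -
  have "inj_on (\<lambda>A i. i \<in> A) (Pow B)" by (auto simp: inj_on_def fun_eq_iff)
  then show ?thesis using that by (simp add: card_image card_Pow)
qed



definition f1 :: "int \<Rightarrow> nat \<Rightarrow> bool" where "f1 n = (\<lambda>i. i = 0 \<and> odd n)"
definition g1 :: "int \<times> int \<Rightarrow> nat \<Rightarrow> bool" where
  "g1 p = (\<lambda>i. (i = 1 \<and> odd (fst p)) \<or> (i = 2 \<and> odd (snd p)))"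

lemma f1_hom: "f1 \<in> hom integer_group V" by (rule homI) (auto simp: f1_def fun_eq_iff)
lemma g1_hom: "g1 \<in> hom Z2 V" by (rule homI) (auto simp: g1_def fun_eq_iff)

interpretation pE: fp2hom integer_group Z2 V f1 g1
  by (intro fp2hom.intro fp2hom_axioms.intro gz.fp2_axioms V_group f1_hom g1_hom)

lemma pi_hom: "fpext V f1 g1 \<in> hom GZ V" using pE.E_hom by (simp add: GZ_def)

lemma GZ_gen: "generate GZ {gen_t, gen_a, gen_b} = carrier GZ"
proof
  show "generate GZ {gen_t, gen_a, gen_b} \<subseteq> carrier GZ"
    by (rule G.generate_incl) (simp add: gen_t_eq gen_a_eq gen_b_eq)
next
  let ?S = "generate GZ {gen_t, gen_a, gen_b}"
  have sub: "subgroup ?S GZ" by (rule G.generate_is_subgroup) (simp add: gen_t_eq gen_a_eq gen_b_eq)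
  have t: "i1 n \<in> ?S" for n
  proof -
    have "gen_t \<in> ?S" by (intro generate.incl) auto
    then show ?thesis using G.subgroup_int_pow_closed[OF sub] i1_pow gen_t_eq by metis
  qed
  have a: "i2 p \<in> ?S" for p
    using i2_in_A[of p] G.mono_generate[of "{gen_a, gen_b}" "{gen_t, gen_a, gen_b}"] by auto
  show "carrier GZ \<subseteq> ?S"
  proof
    fix w assume "w \<in> carrier GZ"
    then have "fp_reduced integer_group Z2 w" by (simp add: GZ_carrier)
    then show "w \<in> ?S"
    proof (induction w)
      case Nil then show ?case using generate.one[of GZ] by (simp add: GZ_one)
    next
      case (Cons l w)
      have w: "fp_reduced integer_group Z2 w" using Cons.prems by (simp add: red_Cons)
      then have wc: "w \<in> carrier GZ" by (simp add: GZ_carrier)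
      show ?case
      proof (cases l)
        case (Inl n)
        have "l # w = i1 n \<otimes>\<^bsub>GZ\<^esub> w" using i1_mult[OF wc] cons_red_eq Cons.prems Inl by simp
        then show ?thesis using t Cons.IH[OF w] generate.eng by metis
      next
        case (Inr n)
        have "l # w = i2 n \<otimes>\<^bsub>GZ\<^esub> w" using i2_mult[OF wc] cons_red_eq Cons.prems Inr by simp
        then show ?thesis using a Cons.IH[OF w] generate.eng by metis
      qed
    qed
  qed
qed

lemma rank_GZ: "group_rank GZ = 3"
proof (rule rank_eq[of "{gen_t, gen_a, gen_b}"])
  show "{gen_t, gen_a, gen_b} \<subseteq> carrier GZ" by (simp add: gen_t_eq gen_a_eq gen_b_eq)
  show "card {gen_t, gen_a, gen_b} = 3" by (simp add: gen_t_def gen_a_def gen_b_def)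
  show "generate GZ {gen_t, gen_a, gen_b} = carrier GZ" by (rule GZ_gen)
next
  fix S assume S: "S \<subseteq> carrier GZ" "finite S" "generate GZ S = carrier GZ"
  let ?T = "(\<lambda>A i. i \<in> A) ` Pow {0::nat,1,2}"
  have "?T \<subseteq> fpext V f1 g1 ` carrier GZ"
  proof
    fix x assume "x \<in> ?T"
    then obtain A where A: "A \<subseteq> {0,1,2}" and x: "x = (\<lambda>i. i \<in> A)" by auto
    define w where "w = i1 (if 0 \<in> A then 1 else 0) \<otimes>\<^bsub>GZ\<^esub> i2 (if 1 \<in> A then 1 else 0, if 2 \<in> A then 1 else 0)"
    have "fpext V f1 g1 w = f1 (if 0 \<in> A then 1 else 0) \<otimes>\<^bsub>V\<^esub> g1 (if 1 \<in> A then 1 else 0, if 2 \<in> A then 1 else 0)"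
      unfolding w_def using hom_mult[OF pi_hom] pE.E_i1 pE.E_i2 by simp
    also have "\<dots> = x" using A by (auto simp: x f1_def g1_def fun_eq_iff)
    finally show "x \<in> fpext V f1 g1 ` carrier GZ" by (auto simp: w_def intro!: image_eqI[where x = w])
  qed
  then have "card ?T \<le> 2 ^ card S" by (intro rank_lb[OF GZ_group pi_hom S])
  moreover have "card ?T = 2 ^ 3" using card_T[of "{0::nat,1,2}"] by simp
  ultimately show "(2::nat) ^ 3 \<le> 2 ^ card S" by simp
qed (simp)



abbreviation "G4 \<equiv> GZ\<lparr>carrier := Fix GZ phi\<rparr>"

lemma G4_group: "group G4" by (rule G.subgroup_imp_group[OF Fix_sub])

definition f2 :: "int \<times> int \<Rightarrow> nat \<Rightarrow> bool" where
  "f2 p = (\<lambda>i. (i = 0 \<and> odd (fst p)) \<or> (i = 1 \<and> odd (snd p)))"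
definition g2 :: "int \<times> int \<Rightarrow> nat \<Rightarrow> bool" where
  "g2 p = (\<lambda>i. (i = 2 \<and> odd (fst p)) \<or> (i = 3 \<and> odd (snd p)))"

lemma f2_hom: "f2 \<in> hom Z2 V" by (rule homI) (auto simp: f2_def fun_eq_iff)
lemma g2_hom: "g2 \<in> hom Z2 V" by (rule homI) (auto simp: g2_def fun_eq_iff)

interpretation rE: fp2hom Z2 Z2 V f2 g2
  by (intro fp2hom.intro fp2hom_axioms.intro f22.fp2_axioms V_group f2_hom g2_hom)

definition ct :: "(int + int \<times> int) list \<Rightarrow> (int + int \<times> int) list" where
  "ct x = i1 1 \<otimes>\<^bsub>GZ\<^esub> x \<otimes>\<^bsub>GZ\<^esub> i1 (-1)"

lemma ct_hom: "ct \<in> hom GZ GZ"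
proof (rule homI)
  fix x assume "x \<in> carrier GZ" then show "ct x \<in> carrier GZ" by (simp add: ct_def)
next
  fix x y assume xy: "x \<in> carrier GZ" "y \<in> carrier GZ"
  have "ct x \<otimes>\<^bsub>GZ\<^esub> ct y = i1 1 \<otimes>\<^bsub>GZ\<^esub> (x \<otimes>\<^bsub>GZ\<^esub> ((i1 (-1) \<otimes>\<^bsub>GZ\<^esub> i1 1) \<otimes>\<^bsub>GZ\<^esub> (y \<otimes>\<^bsub>GZ\<^esub> i1 (-1))))"
    using xy by (simp add: ct_def G.m_assoc)
  also have "\<dots> = ct (x \<otimes>\<^bsub>GZ\<^esub> y)" using xy by (simp add: i1_add ct_def G.m_assoc)
  finally show "ct (x \<otimes>\<^bsub>GZ\<^esub> y) = ct x \<otimes>\<^bsub>GZ\<^esub> ct y" by simp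
qed

lemma conjt_ct: "conjt = ct" by (simp add: fun_eq_iff conjt_eq ct_def)

lemma conjt_i2: "p \<noteq> (0,0) \<Longrightarrow> conjt (i2 p) = [Inl 1, Inr p, Inl (-1)]"
proof -
  assume p: "p \<noteq> (0,0)"
  have "i2 p \<otimes>\<^bsub>GZ\<^esub> i1 (-1) = [Inr p, Inl (-1)]"
    using i2_mult[OF i1_c, of p "-1"] p by (simp add: fpi1_def)
  moreover have "[Inr p, Inl (-1)] \<in> carrier GZ" using p by (simp add: GZ_carrier red_Cons)
  ultimately show ?thesis using i1_mult[of "[Inr p, Inl (-1)]" 1] by (simp add: conjt_eq G.m_assoc)
qed

abbreviation "S4 \<equiv> {gen_a, gen_b, conjt gen_a, conjt gen_b}"

lemma S4_Fix: "S4 \<subseteq> Fix GZ phi"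
proof -
  have "{gen_a, gen_b} \<subseteq> Aab" by (auto intro: generate.incl)
  moreover have "conjt gen_a \<in> Sg" "conjt gen_b \<in> Sg"
    using generate.incl[of gen_a "{gen_a, gen_b}" GZ] generate.incl[of gen_b "{gen_a, gen_b}" GZ]
    by (auto intro!: generate.incl)
  ultimately show ?thesis using Fix_eq by (auto intro: generate.incl)
qed

lemma S4_gen: "generate GZ S4 = Fix GZ phi"
proof
  show "generate GZ S4 \<subseteq> Fix GZ phi" by (rule G.generate_subgroup_incl[OF S4_Fix Fix_sub])
next
  have S4c: "S4 \<subseteq> carrier GZ" using S4_Fix by (auto simp: Fix_def)
  have sub: "subgroup (generate GZ S4) GZ" by (rule G.generate_is_subgroup[OF S4c])
  have A: "Aab \<subseteq> generate GZ S4" by (rule G.mono_generate) auto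
  have gh: "group_hom GZ GZ ct" by (intro group_hom.intro group_hom_axioms.intro GZ_group ct_hom)
  have "conjt ` Aab = generate GZ (conjt ` {gen_a, gen_b})"
    unfolding conjt_ct using group_hom.generate_img[OF gh ab_c] by simp
  also have "\<dots> \<subseteq> generate GZ S4" by (rule G.mono_generate) auto
  finally have "Sg \<subseteq> generate GZ S4" using A by (intro G.generate_subgroup_incl[OF _ sub]) auto
  then show "Fix GZ phi \<subseteq> generate GZ S4" using Fix_eq by simp
qed

lemma rank_Fix: "group_rank G4 = 4"
proof (rule rank_eq[of S4])
  show "S4 \<subseteq> carrier G4" using S4_Fix by simp
  show "card S4 = 4"
    by (simp add: gen_a_eq gen_b_eq conjt_i2) (simp add: fpi2_def)
  show "generate G4 S4 = carrier G4"
    using G.generate_consistent[OF S4_Fix Fix_sub] S4_gen by simp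
next
  fix S assume S: "S \<subseteq> carrier G4" "finite S" "generate G4 S = carrier G4"
  obtain psi4 where psi4: "psi4 \<in> Group.iso G4 FP2" using Fix_iso by (auto simp: is_iso_def)
  have hp: "psi4 \<in> hom G4 FP2" and bp: "bij_betw psi4 (carrier G4) (carrier FP2)"
    using psi4 by (auto simp: Group.iso_def)
  have h: "fpext V f2 g2 \<circ> psi4 \<in> hom G4 V" by (rule hom_compose[OF hp rE.E_hom])
  have img: "(fpext V f2 g2 \<circ> psi4) ` carrier G4 = fpext V f2 g2 ` carrier FP2"
    using bij_betw_imp_surj_on[OF bp] image_comp by metis
  let ?T = "(\<lambda>A i. i \<in> A) ` Pow {0::nat,1,2,3}"
  have "?T \<subseteq> fpext V f2 g2 ` carrier FP2"
  proof
    fix x assume "x \<in> ?T"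
    then obtain A where A: "A \<subseteq> {0,1,2,3}" and x: "x = (\<lambda>i. i \<in> A)" by auto
    define p where "p = (if 0 \<in> A then 1 else 0 :: int, if 1 \<in> A then 1 else 0 :: int)"
    define q where "q = (if 2 \<in> A then 1 else 0 :: int, if 3 \<in> A then 1 else 0 :: int)"
    define w where "w = fpi1 Z2 p \<otimes>\<^bsub>FP2\<^esub> fpi2 Z2 q"
    have "fpext V f2 g2 w = f2 p \<otimes>\<^bsub>V\<^esub> g2 q"
      unfolding w_def using hom_mult[OF rE.E_hom] rE.E_i1 rE.E_i2 f22.i1_carrier f22.i2_carrier by simp
    also have "\<dots> = x" using A by (auto simp: x f2_def g2_def p_def q_def fun_eq_iff)
    finally show "x \<in> fpext V f2 g2 ` carrier FP2"
      using monoid.m_closed[OF group.is_monoid[OF FP2_group] f22.i1_carrier f22.i2_carrier, of p q]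
      by (auto simp: w_def intro!: image_eqI[where x = w])
  qed
  then have "?T \<subseteq> (fpext V f2 g2 \<circ> psi4) ` carrier G4" by (simp only: img)
  then have "card ?T \<le> 2 ^ card S" by (intro rank_lb[OF G4_group h S])
  moreover have "card ?T = 2 ^ 4" using card_T[of "{0::nat,1,2,3}"] by simp
  ultimately show "(2::nat) ^ 4 \<le> 2 ^ card S" by simp
qed (simp)

theorem mainTheorem13:
  shows "group GZ
    \<and> phi \<in> Group.iso GZ GZ
    \<and> phi gen_t = gen_t \<otimes>\<^bsub>GZ\<^esub> gen_a \<and> phi gen_a = gen_a \<and> phi gen_b = gen_b
    \<and> Fix GZ phi = generate GZ (generate GZ {gen_a, gen_b}
          \<union> (\<lambda>x. gen_t \<otimes>\<^bsub>GZ\<^esub> x \<otimes>\<^bsub>GZ\<^esub> inv\<^bsub>GZ\<^esub> gen_t) ` generate GZ {gen_a, gen_b})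
    \<and> GZ\<lparr>carrier := Fix GZ phi\<rparr> \<cong> free_prod Z2 Z2
    \<and> group_rank (GZ\<lparr>carrier := Fix GZ phi\<rparr>) = 4
    \<and> group_rank GZ = 3
    \<and> group_rank (GZ\<lparr>carrier := Fix GZ phi\<rparr>) = 2 * (group_rank GZ - 1)"
  using GZ_group phi_iso phi_t phi_i2[of "(1,0)"] phi_i2[of "(0,1)"] Fix_eq Fix_iso rank_Fix rank_GZ
  by (simp add: gen_a_eq gen_b_eq)


end
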